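(* Consider the diploid population model of the context with environment (A), and suppose one of the following holds: (a) $0<\alpha<1$, $\zeta(N)^{3-\alpha}/N^2\to0$ and $\limsup_{N\to\infty}\varepsilon_N/c_N<\infty$; (b) $1\le\alpha<2$, $\zeta(N)/N\to0$ and $\varepsilon_N=cN^{\alpha-2}(\mathbf 1\{\kappa>2\}+\mathbf 1\{\kappa=2\}\log N)$ for a fixed $c>0$. Then $$\limsup_{N\to\infty}\frac{N}{c_N}\,\mathbb E\Big[\frac{X_1(X_1-1)(X_1-2)}{S_N^3}\mathbf 1\{S_N\ge2N\}\Big]=0.$$
   Context: Population of $2N$ diploid individuals; each generation they form $N$ uniformly random parent pairs, pair $i$ produces $X_i$ diploid potential offspring (one gene copy from each parent, chosen uniformly from that parent's two copies), $S_N=X_1+\dots+X_N$; if $S_N\ge2N$, $2N$ potential offspring are sampled uniformly without replacement to survive, otherwise the population is unchanged; generations are independent. Environment (A): fix $0<\alpha<2\le\kappa$; with probability $\varepsilon_N\in(0,1)$ all $X_i$ are i.i.d. with law $\mathbb L(\alpha,\zeta(N))$, otherwise i.i.d. with law $\mathbb L(\kappa,\zeta(N))$. Here $X\vartriangleright\mathbb L(a,\zeta(N))$ means $\mathbb P(X\le\zeta(N))=1$, remaining mass outside $\{2,\dots,\zeta(N)\}$ on $\{0,1\}$, and $g_a(k)(k^{-a}-(1+k)^{-a})\le\mathbb P(X=k)\le f_a(k)(k^{-a}-(1+k)^{-a})$ for $2\le k\le\zeta(N)$, with $g_a\le f_a$ bounded positive functions, $\inf_k\sup_{i\ge k}f_a(i)<\infty$,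 $\sup_k\inf_{i\ge k}g_a(i)>0$, limits $\lim_kf_a(k),\lim_kg_a(k)$ existing and positive; $\mathbb E[X]>2$ is assumed. $c_N=\mathbb E[\nu_1(\nu_1-1)]/(8(2N-1))$ where $\nu_1$ is the number of surviving offspring of pair 1 (the probability that two gene copies in distinct individuals derive from the same parental gene copy). *)

theory Defs
  imports "HOL-Probability.Probability"
begin

fun sum_pmf :: "nat pmf \<Rightarrow> nat \<Rightarrow> nat pmf" where
  "sum_pmf p 0 = return_pmf 0"
| "sum_pmf p (Suc n) = bind_pmf p (\<lambda>x. map_pmf ((+) x) (sum_pmf p n))"

text \<open>Expectation of h(X_1, S_N) when X_1,...,X_N are i.i.d. with law p
  (S_N = X_1 + ... + X_N).\<close>
definition iid_exp :: "nat pmf \<Rightarrow> nat \<Rightarrow> (nat \<Rightarrow> nat \<Rightarrow> real) \<Rightarrow> real" where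
  "iid_exp p N h = measure_pmf.expectation (pair_pmf p (sum_pmf p (N - 1)))
                     (\<lambda>(x, s). h x (x + s))"

definition envA_exp :: "real \<Rightarrow> nat pmf \<Rightarrow> nat pmf \<Rightarrow> nat \<Rightarrow> (nat \<Rightarrow> nat \<Rightarrow> real) \<Rightarrow> real" where
  "envA_exp eps pa pk N h = eps * iid_exp pa N h + (1 - eps) * iid_exp pk N h"

text \<open>Conditional expectation of nu_1 (nu_1 - 1) given X_1 = x, S_N = s >= 2N:
  nu_1 is hypergeometric (2N of the s potential offspring sampled uniformly
  without replacement, x of which belong to pair 1).\<close>
definition nu_ff2 :: "nat \<Rightarrow> nat \<Rightarrow> nat \<Rightarrow> real" where
  "nu_ff2 N x s = (\<Sum>k\<le>x. real k * (real k - 1) *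
      (real (x choose k) * real ((s - x) choose (2 * N - k)) / real (s choose (2 * N))))"

text \<open>Surviving offspring: if S_N < 2N the population is unchanged, nu_1 = 0.\<close>
definition cN :: "real \<Rightarrow> nat pmf \<Rightarrow> nat pmf \<Rightarrow> nat \<Rightarrow> real" where
  "cN eps pa pk N = envA_exp eps pa pk N
       (\<lambda>x s. if s \<ge> 2 * N then nu_ff2 N x s else 0) / (8 * (2 * real N - 1))"

definition law_L :: "real \<Rightarrow> nat \<Rightarrow> (nat \<Rightarrow> real) \<Rightarrow> (nat \<Rightarrow> real) \<Rightarrow> nat pmf \<Rightarrow> bool" where
  "law_L a z g f p \<longleftrightarrow> set_pmf p \<subseteq> {0..z} \<and>
     (\<forall>k. 2 \<le> k \<and> k \<le> z \<longrightarrow>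
        g k * (real k powr (-a) - (1 + real k) powr (-a)) \<le> pmf p k \<and>
        pmf p k \<le> f k * (real k powr (-a) - (1 + real k) powr (-a)))"

definition envelope :: "(nat \<Rightarrow> real) \<Rightarrow> (nat \<Rightarrow> real) \<Rightarrow> bool" where
  "envelope g f \<longleftrightarrow> (\<forall>k. 0 < g k \<and> g k \<le> f k) \<and> bounded (range f) \<and> bounded (range g)
     \<and> (\<exists>L. 0 < L \<and> f \<longlonglongrightarrow> L) \<and> (\<exists>L. 0 < L \<and> g \<longlonglongrightarrow> L)"

end

theory Submission
  imports Defs
begin

lemma ff_id: "(Suc (Suc j)) * (Suc j) * (Suc (Suc a) choose Suc (Suc j)) = Suc (Suc a) * Suc a * (a choose j)"
proof -
  have "(Suc (Suc j)) * (Suc (Suc a) choose Suc (Suc j)) = Suc (Suc a) * (Suc a choose Suc j)"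
    by (rule Suc_times_binomial)
  moreover have "Suc j * (Suc a choose Suc j) = Suc a * (a choose j)"
    by (rule Suc_times_binomial)
  ultimately show ?thesis by (metis mult.assoc mult.commute)
qed

lemma comb_ge:
  fixes x s m :: nat
  assumes "2 \<le> x" "x \<le> s" "2 \<le> m"
  shows "x*(x-1)*((s-2) choose (m-2)) \<le> (\<Sum>k\<le>x. k*(k-1)*((x choose k)*((s-x) choose (m-k))))"
proof -
  obtain a where a: "x = Suc (Suc a)" using assms(1) by (metis add_2_eq_Suc le_Suc_ex)
  obtain b where b: "m = Suc (Suc b)" using assms(3) by (metis add_2_eq_Suc le_Suc_ex)
  define n where "n = s - x"
  have sn: "s - 2 = a + n" using assms a n_def by simp
  define f where "f k = k*(k-1)*((x choose k)*(n choose (m-k)))" for k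
  have f0: "f k = 0" if "k > x" for k using that by (simp add: f_def)
  have "x*(x-1)*((s-2) choose (m-2)) = x*(x-1)*(\<Sum>j\<le>b. (a choose j) * (n choose (b - j)))"
    using vandermonde[of a n b] sn b by simp
  also have "\<dots> = (\<Sum>j\<le>b. f (Suc (Suc j)))"
    unfolding sum_distrib_left
  proof (rule sum.cong[OF refl])
    fix j assume "j \<in> {..b}"
    have "x * (x - 1) * ((a choose j) * (n choose (b - j))) = (Suc (Suc a) * Suc a * (a choose j)) * (n choose (b - j))"
      by (simp add: a algebra_simps)
    also have "\<dots> = ((Suc (Suc j)) * (Suc j) * (Suc (Suc a) choose Suc (Suc j))) * (n choose (b - j))"
      by (simp only: ff_id)
    also have "\<dots> = f (Suc (Suc j))" by (simp only: f_def a b diff_Suc_Suc diff_Suc_1 mult.assoc)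
    finally show "x * (x - 1) * ((a choose j) * (n choose (b - j))) = f (Suc (Suc j))" .
  qed
  also have "\<dots> \<le> (\<Sum>j\<le>a. f (Suc (Suc j)))"
  proof (cases "b \<le> a")
    case True then show ?thesis by (intro sum_mono2) auto
  next
    case False
    have "(\<Sum>j\<le>b. f (Suc (Suc j))) = (\<Sum>j\<le>a. f (Suc (Suc j)))"
      by (rule sum.mono_neutral_right) (use False f0 a in auto)
    then show ?thesis by simp
  qed
  also have "\<dots> = (\<Sum>k\<le>x. f k)"
    unfolding a sum.atMost_Suc_shift by (simp add: f_def)
  finally show ?thesis by (simp add: f_def n_def)
qed

lemma ratio_id:
  fixes s m :: nat assumes "2 \<le> m"
  shows "m*(m-1)*(s choose m) = s*(s-1)*((s-2) choose (m-2))"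
proof (cases "s \<ge> 2")
  case True
  obtain b where b: "m = Suc (Suc b)" using assms by (metis add_2_eq_Suc le_Suc_ex)
  obtain c where c: "s = Suc (Suc c)" using True by (metis add_2_eq_Suc le_Suc_ex)
  show ?thesis using ff_id[of b c] by (simp add: b c)
next
  case False
  then have "s < m" using assms by simp
  then have "s choose m = 0" by simp
  moreover have "s = 0 \<or> s = 1" using False by arith
  ultimately show ?thesis by auto
qed

lemma frac_aux: fixes A B C D E :: real
  assumes "B * C = D * E" "0 < C" "0 < D" shows "A * B / D = A * E / C"
  using assms by (simp add: field_simps)

lemma nu_ge:
  assumes "2 \<le> x" "x \<le> s" "2 * N \<le> s" "1 \<le> N"
  shows "real x * (real x - 1) * (2 * real N) * (2 * real N - 1) / (real s * (real s - 1)) \<le> nu_ff2 N x s"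
proof -
  define m where "m = 2 * N"
  have m2: "2 \<le> m" using assms m_def by simp
  have ms: "m \<le> s" using assms m_def by simp
  have s2: "2 \<le> s" using m2 ms by simp
  have cpos: "0 < real (s choose m)" using ms by simp
  have "nu_ff2 N x s = real (\<Sum>k\<le>x. k*(k-1)*((x choose k)*((s-x) choose (m-k)))) / real (s choose m)"
    unfolding nu_ff2_def m_def of_nat_sum sum_divide_distrib
    by (intro sum.cong refl) (auto simp: of_nat_diff)
  also have "\<dots> \<ge> real (x*(x-1)*((s-2) choose (m-2))) / real (s choose m)"
    using comb_ge[OF assms(1,2) m2] cpos by (intro divide_right_mono) (simp only: of_nat_le_iff, simp)
  finally have A: "real (x*(x-1)*((s-2) choose (m-2))) / real (s choose m) \<le> nu_ff2 N x s" .
  have R: "real (m*(m-1)) * real (s choose m) = real (s*(s-1)) * real ((s-2) choose (m-2))"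
    using ratio_id[OF m2, of s] by (metis mult.assoc of_nat_mult)
  have sp: "real (s*(s-1)) > 0" using s2 by simp
  have "real x * (real x - 1) * (2 * real N) * (2 * real N - 1) / (real s * (real s - 1))
       = real (x*(x-1)) * real (m*(m-1)) / real (s*(s-1))"
    using assms s2 m2 by (simp add: m_def of_nat_diff)
  also have "\<dots> = real (x*(x-1)*((s-2) choose (m-2))) / real (s choose m)"
    using frac_aux[OF R cpos sp, of "real (x*(x-1))"] by (simp only: of_nat_mult)
  finally show ?thesis using A by simp
qed

lemma alg_aux: fixes n s a z :: real
  assumes "n > 0" "s - 1 > 0" "2 * n - 1 > 0"
  shows "a * z / (2 * n * (s * (s - 1))) = z / (4 * n^2 * (2 * n - 1)) * (a * (2 * n) * (2 * n - 1) / (s * (s - 1)))"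
proof -
  have g: "a * z / (2 * n * d) = z / (4 * n^2 * e) * (a * (2 * n) * e / d)" if "d > 0" "e > 0" for d e :: real
    using that assms(1) by (simp add: field_simps power2_eq_square)
  have "s * (s - 1) > 0" using assms by simp
  from g[OF this assms(3)] show ?thesis .
qed

lemma cube_nonneg: "0 \<le> real x * (real x - 1) * (real x - 2)"
proof (cases "x < 2")
  case True then have "x = 0 \<or> x = 1" by arith
  then show ?thesis by auto
qed simp

lemma nu_nonneg: "0 \<le> nu_ff2 N x s"
  unfolding nu_ff2_def
proof (intro sum_nonneg)
  fix k assume "k \<in> {..x}"
  have "0 \<le> real k * (real k - 1)" by (cases k) auto
  then show "0 \<le> real k * (real k - 1) * (real (x choose k) * real (s - x choose (2 * N - k)) / real (s choose (2 * N)))"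
    by simp
qed

lemma point:
  fixes x s z N :: nat
  assumes "x \<le> z" "x \<le> s" "1 \<le> N"
  shows "(if s \<ge> 2 * N then real x * (real x - 1) * (real x - 2) / (real s) ^ 3 else 0)
     \<le> real z / (4 * (real N)^2 * (2 * real N - 1)) * (if s \<ge> 2 * N then nu_ff2 N x s else 0)"
proof (cases "s \<ge> 2 * N")
  case False then show ?thesis by simp
next
  case True
  have Mpos: "0 \<le> real z / (4 * (real N)^2 * (2 * real N - 1))" using assms by simp
  show ?thesis
  proof (cases "x < 2")
    case True
    then have "x = 0 \<or> x = 1" by arith
    have "0 \<le> real z / (4 * (real N)^2 * (2 * real N - 1)) * nu_ff2 N x s"
      using Mpos nu_nonneg[of N x s] by (rule mult_nonneg_nonneg)
    then show ?thesis using \<open>x = 0 \<or> x = 1\<close> True by auto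
  next
    case False
    then have x2: "2 \<le> x" by simp
    have s2: "2 \<le> real s" using True assms by simp
    have sN: "2 * real N \<le> real s" using True by simp
    have xx: "0 \<le> real x * (real x - 1)" using x2 by simp
    have "real x * (real x - 1) * (real x - 2) / (real s) ^ 3 \<le> real x * (real x - 1) * real z / (real s) ^ 3"
      using xx assms x2 by (intro divide_right_mono mult_left_mono) auto
    also have "\<dots> \<le> real x * (real x - 1) * real z / (2 * real N * (real s * (real s - 1)))"
    proof (intro divide_left_mono)
      have "2 * real N * (real s * (real s - 1)) \<le> real s * (real s * (real s - 1))"
        using sN s2 by (intro mult_right_mono) auto
      also have "\<dots> \<le> real s ^ 3" using s2 by (simp add: power3_eq_cube algebra_simps)
      finally show "2 * real N * (real s * (real s - 1)) \<le> real s ^ 3" .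
      show "0 \<le> real x * (real x - 1) * real z" using xx by simp
      show "0 < real s ^ 3 * (2 * real N * (real s * (real s - 1)))" using s2 assms by simp
    qed
    also have "\<dots> = real z / (4 * (real N)^2 * (2 * real N - 1)) *
        (real x * (real x - 1) * (2 * real N) * (2 * real N - 1) / (real s * (real s - 1)))"
    proof -
      have "real s - 1 > 0" "2 * real N - 1 > 0" "real N > 0" using assms s2 by auto
      then show ?thesis using alg_aux[of "real N" "real s" "real x * (real x - 1)" "real z"] by simp
    qed
    also have "\<dots> \<le> real z / (4 * (real N)^2 * (2 * real N - 1)) * nu_ff2 N x s"
      using nu_ge[OF x2 assms(2) True assms(3)] Mpos by (intro mult_left_mono) auto
    finally show ?thesis using True by simp
  qed
qed

lemma finite_sum_pmf: "finite (set_pmf p) \<Longrightarrow> finite (set_pmf (sum_pmf p n))"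
  by (induction n) auto

lemma iid_bound:
  fixes p :: "nat pmf" and z N :: nat
  assumes "set_pmf p \<subseteq> {0..z}" "1 \<le> N"
  shows "iid_exp p N (\<lambda>x s. if s \<ge> 2 * N then real x * (real x - 1) * (real x - 2) / (real s) ^ 3 else 0)
     \<le> real z / (4 * (real N)^2 * (2 * real N - 1)) * iid_exp p N (\<lambda>x s. if s \<ge> 2 * N then nu_ff2 N x s else 0)"
    (is "?L \<le> ?M * ?R")
  and "0 \<le> iid_exp p N (\<lambda>x s. if s \<ge> 2 * N then real x * (real x - 1) * (real x - 2) / (real s) ^ 3 else 0)"
  and "0 \<le> iid_exp p N (\<lambda>x s. if s \<ge> 2 * N then nu_ff2 N x s else 0)"
proof -
  have fp: "finite (set_pmf p)" using assms(1) finite_subset by blast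
  define q where "q = pair_pmf p (sum_pmf p (N - 1))"
  have fq: "finite (set_pmf q)" unfolding q_def using fp finite_sum_pmf by auto
  have I: "integrable (measure_pmf q) f" for f :: "nat \<times> nat \<Rightarrow> real"
    by (rule integrable_measure_pmf_finite[OF fq])
  have "?L \<le> measure_pmf.expectation q (\<lambda>y. ?M * (case y of (x, t) \<Rightarrow> (if x + t \<ge> 2 * N then nu_ff2 N x (x + t) else 0)))"
    unfolding iid_exp_def q_def[symmetric]
  proof (intro integral_mono_AE I)
    show "AE y in measure_pmf q. (case y of (x, s) \<Rightarrow> if 2 * N \<le> x + s then real x * (real x - 1) * (real x - 2) / real (x + s) ^ 3 else 0)
        \<le> ?M * (case y of (x, t) \<Rightarrow> if 2 * N \<le> x + t then nu_ff2 N x (x + t) else 0)"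
      unfolding AE_measure_pmf_iff
    proof (intro ballI)
      fix y assume "y \<in> set_pmf q"
      then obtain x t where y: "y = (x, t)" and "x \<in> set_pmf p" unfolding q_def by auto
      then have "x \<le> z" using assms(1) by auto
      from point[OF this _ assms(2), of "x + t"] 
      show "(case y of (x, s) \<Rightarrow> if 2 * N \<le> x + s then real x * (real x - 1) * (real x - 2) / real (x + s) ^ 3 else 0)
        \<le> ?M * (case y of (x, t) \<Rightarrow> if 2 * N \<le> x + t then nu_ff2 N x (x + t) else 0)"
        unfolding y by simp
    qed
  qed
  also have "\<dots> = ?M * ?R" unfolding iid_exp_def q_def[symmetric] by simp
  finally show "?L \<le> ?M * ?R" .
  show "0 \<le> ?L" unfolding iid_exp_def
    by (intro integral_nonneg_AE AE_pmfI) (auto intro!: divide_nonneg_nonneg cube_nonneg)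
  show "0 \<le> ?R" unfolding iid_exp_def
    by (intro integral_nonneg_AE AE_pmfI) (auto intro!: nu_nonneg)
qed

lemma main_bound:
  fixes eps :: real and pa pk :: "nat pmf" and z N :: nat
  assumes "0 < eps" "eps < 1" "set_pmf pa \<subseteq> {0..z}" "set_pmf pk \<subseteq> {0..z}" "1 \<le> N"
  shows "0 \<le> real N / cN eps pa pk N * envA_exp eps pa pk N
             (\<lambda>x s. if s \<ge> 2 * N then real x * (real x - 1) * (real x - 2) / (real s) ^ 3 else 0)"
    (is "0 \<le> ?Q")
  and "real N / cN eps pa pk N * envA_exp eps pa pk N
             (\<lambda>x s. if s \<ge> 2 * N then real x * (real x - 1) * (real x - 2) / (real s) ^ 3 else 0)
       \<le> 2 * real z / real N"
proof -
  define h3 where "h3 = (\<lambda>x s. if s \<ge> 2 * N then real x * (real x - 1) * (real x - 2) / (real s) ^ 3 else 0)"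
  define hn where "hn = (\<lambda>x s. if s \<ge> 2 * N then nu_ff2 N x s else 0)"
  define M where "M = real z / (4 * (real N)^2 * (2 * real N - 1))"
  note A = iid_bound[OF assms(3,5), folded h3_def hn_def M_def]
  note K = iid_bound[OF assms(4,5), folded h3_def hn_def M_def]
  define E where "E = envA_exp eps pa pk N h3"
  define D where "D = envA_exp eps pa pk N hn"
  have e1: "0 \<le> 1 - eps" using assms by simp
  have E0: "0 \<le> E" unfolding E_def envA_exp_def using A(2) K(2) assms e1 by simp
  have D0: "0 \<le> D" unfolding D_def envA_exp_def using A(3) K(3) assms e1 by simp
  have ED: "E \<le> M * D"
  proof -
    have "E \<le> eps * (M * iid_exp pa N hn) + (1 - eps) * (M * iid_exp pk N hn)"
      unfolding E_def envA_exp_def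
      using A(1) K(1) assms(1) e1 by (intro add_mono mult_left_mono) auto
    also have "\<dots> = M * D" unfolding D_def envA_exp_def by (simp add: algebra_simps)
    finally show ?thesis .
  qed
  have N1: "2 * real N - 1 > 0" using assms by simp
  have cE: "cN eps pa pk N = D / (8 * (2 * real N - 1))" unfolding cN_def D_def hn_def by simp
  have Q: "?Q = 8 * real N * (2 * real N - 1) * E / D" unfolding cE E_def h3_def using N1 by simp
  show "0 \<le> ?Q" unfolding Q using E0 D0 N1 by simp
  show "?Q \<le> 2 * real z / real N"
  proof (cases "D = 0")
    case True then show ?thesis unfolding Q by simp
  next
    case False
    then have Dp: "D > 0" using D0 by simp
    have "8 * real N * (2 * real N - 1) * E / D \<le> 8 * real N * (2 * real N - 1) * (M * D) / D"
      using ED Dp N1 assms by (intro divide_right_mono mult_left_mono) auto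
    also have "\<dots> = 2 * real z / real N" unfolding M_def using Dp N1 assms
      by (simp add: field_simps power2_eq_square)
    finally show ?thesis unfolding Q .
  qed
qed

theorem lemma8:
  fixes \<alpha> \<kappa> :: real and \<zeta> :: "nat \<Rightarrow> nat" and \<epsilon> :: "nat \<Rightarrow> real"
    and g\<alpha> f\<alpha> g\<kappa> f\<kappa> :: "nat \<Rightarrow> real" and p\<alpha> p\<kappa> :: "nat \<Rightarrow> nat pmf"
  assumes "0 < \<alpha>" "\<alpha> < 2" "2 \<le> \<kappa>"
    and "\<forall>N. 0 < \<epsilon> N \<and> \<epsilon> N < 1"
    and "envelope g\<alpha> f\<alpha>" "envelope g\<kappa> f\<kappa>"
    and "\<forall>N. law_L \<alpha> (\<zeta> N) g\<alpha> f\<alpha> (p\<alpha> N)"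
    and "\<forall>N. law_L \<kappa> (\<zeta> N) g\<kappa> f\<kappa> (p\<kappa> N)"
    and "\<forall>\<^sub>F N in sequentially. measure_pmf.expectation (p\<alpha> N) real > 2
                              \<and> measure_pmf.expectation (p\<kappa> N) real > 2"
    and "(\<alpha> < 1 \<and> ((\<lambda>N. real (\<zeta> N) powr (3 - \<alpha>) / (real N)\<^sup>2) \<longlonglongrightarrow> 0)
           \<and> (\<exists>C. \<forall>\<^sub>F N in sequentially. \<epsilon> N / cN (\<epsilon> N) (p\<alpha> N) (p\<kappa> N) N \<le> C))
       \<or> (1 \<le> \<alpha> \<and> ((\<lambda>N. real (\<zeta> N) / real N) \<longlonglongrightarrow> 0)
           \<and> (\<exists>c>0. \<forall>\<^sub>F N in sequentially.
                \<epsilon> N = c * real N powr (\<alpha> - 2) * (if \<kappa> > 2 then 1 else ln (real N))))"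
  shows "limsup (\<lambda>N. ereal (real N / cN (\<epsilon> N) (p\<alpha> N) (p\<kappa> N) N *
           envA_exp (\<epsilon> N) (p\<alpha> N) (p\<kappa> N) N
             (\<lambda>x s. if s \<ge> 2 * N
                     then real x * (real x - 1) * (real x - 2) / (real s) ^ 3 else 0))) = 0"
proof -
  have Z: "(\<lambda>N. real (\<zeta> N) / real N) \<longlonglongrightarrow> 0"
  proof (cases "\<alpha> < 1")
    case False then show ?thesis using assms(10) by auto
  next
    case True
    then have T: "(\<lambda>N. real (\<zeta> N) powr (3 - \<alpha>) / (real N)\<^sup>2) \<longlonglongrightarrow> 0" using assms(10) by auto
    have "(\<lambda>N. (real (\<zeta> N) / real N)^2) \<longlonglongrightarrow> 0"
    proof (rule tendsto_sandwich[OF _ _ tendsto_const T])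
      show "\<forall>\<^sub>F N in sequentially. 0 \<le> (real (\<zeta> N) / real N)^2" by simp
      show "\<forall>\<^sub>F N in sequentially. (real (\<zeta> N) / real N)^2 \<le> real (\<zeta> N) powr (3 - \<alpha>) / (real N)\<^sup>2"
      proof (intro always_eventually allI)
        fix N
        have "real (\<zeta> N) ^ 2 \<le> real (\<zeta> N) powr (3 - \<alpha>)"
        proof (cases "\<zeta> N = 0")
          case True then show ?thesis by simp
        next
          case False
          then have "1 \<le> real (\<zeta> N)" by simp
          then have "real (\<zeta> N) powr 2 \<le> real (\<zeta> N) powr (3 - \<alpha>)"
            using \<open>\<alpha> < 1\<close> by (intro powr_mono) auto
          then show ?thesis using False by (simp add: powr_realpow)
        qed
        then show "(real (\<zeta> N) / real N)^2 \<le> real (\<zeta> N) powr (3 - \<alpha>) / (real N)\<^sup>2"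
          by (simp add: power_divide divide_right_mono)
      qed
    qed
    then have "(\<lambda>N. sqrt ((real (\<zeta> N) / real N)^2)) \<longlonglongrightarrow> sqrt 0" by (intro tendsto_real_sqrt)
    then show ?thesis by simp
  qed
  let ?Q = "\<lambda>N. real N / cN (\<epsilon> N) (p\<alpha> N) (p\<kappa> N) N *
           envA_exp (\<epsilon> N) (p\<alpha> N) (p\<kappa> N) N
             (\<lambda>x s. if s \<ge> 2 * N
                     then real x * (real x - 1) * (real x - 2) / (real s) ^ 3 else 0)"
  have sa: "set_pmf (p\<alpha> N) \<subseteq> {0..\<zeta> N}" for N using assms(7) unfolding law_L_def by auto
  have sk: "set_pmf (p\<kappa> N) \<subseteq> {0..\<zeta> N}" for N using assms(8) unfolding law_L_def by auto
  have ep: "0 < \<epsilon> N" "\<epsilon> N < 1" for N using assms(4) by auto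
  have "?Q \<longlonglongrightarrow> 0"
  proof (rule tendsto_sandwich[OF _ _ tendsto_const])
    show "\<forall>\<^sub>F N in sequentially. 0 \<le> ?Q N"
      using eventually_ge_at_top[of 1] by eventually_elim (rule main_bound(1)[OF ep sa sk])
    show "\<forall>\<^sub>F N in sequentially. ?Q N \<le> 2 * (real (\<zeta> N) / real N)"
      using eventually_ge_at_top[of 1] by eventually_elim (use main_bound(2)[OF ep sa sk] in simp)
    show "(\<lambda>N. 2 * (real (\<zeta> N) / real N)) \<longlonglongrightarrow> 0" using tendsto_mult_right_zero[OF Z] by simp
  qed
  then have "(\<lambda>N. ereal (?Q N)) \<longlonglongrightarrow> ereal 0" by (rule tendsto_ereal)
  then have "limsup (\<lambda>N. ereal (?Q N)) = ereal 0" by (intro lim_imp_Limsup) simp_all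
  then show ?thesis by (simp add: zero_ereal_def)
qed

end
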